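(* Consider Algorithm 1 applied to $\min\varphi(w)$ s.t. $w\in D$, and assume that the sublevel set $\mathcal S_\varphi(w^0):=\{w\in D:\varphi(w)\le\varphi(w^0)\}$ is bounded. Then exactly one of the following occurs: (i) in some outer iteration $j$ the inner loop does not terminate; then $w^{j,i}\to w^j$ as $i\to\infty$, $w^j$ is M-stationary, and $\|\gamma_{j,i}(w^j-w^{j,i})+\nabla\varphi(w^{j,i})-\nabla\varphi(w^j)\|\to0$ as $i\to\infty$; (ii) the inner loop always terminates; then the infinite sequence $\{w^j\}$ of outer iterates has convergent subsequences, and every subsequence with $w^j\to_K\bar w$ satisfies: $\bar w$ is M-stationary and $\gamma_j(w^{j+1}-w^j)\to_K0$.
   Context: $\mathbb W$ is a Euclidean space, $\varphi\colon\mathbb W\to\mathbb R$ continuously differentiable, $D\subset\mathbb W$ nonempty and closed (neither need be convex). A point $w\in D$ is M-stationary for $\min\varphi$ over $D$ if $0\in\nabla\varphi(w)+\mathcal N^{\lim}_D(w)$, where $\mathcal N^{\lim}_D(\bar w):=\limsup_{w\to\bar w}\operatorname{cone}(w-\Pi_D(w))$ (outer set limit, $\Pi_D$ the multivalued Euclidean projection). Algorithm 1 (general spectral gradient method, without termination test): parameters $\tau>1$, $\sigma\in(0,1)$, $0<\gamma_{\min}\le\gamma_{\max}<\infty$, $m\in\mathbb N$, starting point $w^0\in D$. For $j=0,1,2,\dots$: set $m_j:=\min(j,m)$ and choose $\gamma_j^0\in[\gamma_{\min},\gamma_{\max}]$; for $i=1,2,\dots$ set $\gamma_{j,i}:=\tau^{i-1}\gamma_j^0$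 and compute a (global) solution $w^{j,i}$ of $\min_w \varphi(w^j)+\langle\nabla\varphi(w^j),w-w^j\rangle+\frac{\gamma_{j,i}}2\|w-w^j\|^2$ s.t. $w\in D$ (subproblem $Q(j,i)$); the inner loop stops at the first $i$ with $\varphi(w^{j,i})\le\max_{r=0,\dots,m_j}\varphi(w^{j-r})+\sigma\langle\nabla\varphi(w^j),w^{j,i}-w^j\rangle$; then set $i_j:=i$, $\gamma_j:=\gamma_{j,i_j}$, $w^{j+1}:=w^{j,i_j}$. *)

theory Defs
  imports "HOL-Analysis.Analysis"
begin

definition proj :: "'a::euclidean_space set \<Rightarrow> 'a \<Rightarrow> 'a set" where
  "proj D x = {z \<in> D. \<forall>y\<in>D. dist x z \<le> dist x y}"

definition proj_cone :: "'a::euclidean_space set \<Rightarrow> 'a \<Rightarrow> 'a set" where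
  "proj_cone D x = {t *\<^sub>R (x - z) | t z. t \<ge> 0 \<and> z \<in> proj D x}"

definition lim_normal :: "'a::euclidean_space set \<Rightarrow> 'a \<Rightarrow> 'a set" where
  "lim_normal D wbar = {v. \<exists>xs vs. xs \<longlonglongrightarrow> wbar \<and> vs \<longlonglongrightarrow> v \<and>
                                 (\<forall>k. vs k \<in> proj_cone D (xs k))}"

definition M_stationary :: "('a::euclidean_space \<Rightarrow> 'a) \<Rightarrow> 'a set \<Rightarrow> 'a \<Rightarrow> bool" where
  "M_stationary grad D w \<longleftrightarrow> w \<in> D \<and> (\<exists>v \<in> lim_normal D w. grad w + v = 0)"

definition gam :: "real \<Rightarrow> (nat \<Rightarrow> real) \<Rightarrow> nat \<Rightarrow> nat \<Rightarrow> real" where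
  "gam \<tau> g0 j i = \<tau> ^ (i - 1) * g0 j"

definition solves_Q :: "('a::euclidean_space \<Rightarrow> real) \<Rightarrow> ('a \<Rightarrow> 'a) \<Rightarrow> 'a set \<Rightarrow> 'a \<Rightarrow> real \<Rightarrow> 'a \<Rightarrow> bool" where
  "solves_Q \<phi> grad D wj g x \<longleftrightarrow> x \<in> D \<and>
     (\<forall>y\<in>D. \<phi> wj + grad wj \<bullet> (x - wj) + g / 2 * (norm (x - wj))\<^sup>2
             \<le> \<phi> wj + grad wj \<bullet> (y - wj) + g / 2 * (norm (y - wj))\<^sup>2)"

definition accepted :: "('a::euclidean_space \<Rightarrow> real) \<Rightarrow> ('a \<Rightarrow> 'a) \<Rightarrow> real \<Rightarrow> nat
      \<Rightarrow> (nat \<Rightarrow> 'a) \<Rightarrow> (nat \<Rightarrow> nat \<Rightarrow> 'a) \<Rightarrow> nat \<Rightarrow> nat \<Rightarrow> bool" where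
  "accepted \<phi> grad \<sigma> m w wt j i \<longleftrightarrow>
     \<phi> (wt j i) \<le> Max ((\<lambda>r. \<phi> (w (j - r))) ` {0..min j m}) + \<sigma> * (grad (w j) \<bullet> (wt j i - w j))"

definition inner_terminates where
  "inner_terminates \<phi> grad \<sigma> m w wt j \<longleftrightarrow> (\<exists>i\<ge>1. accepted \<phi> grad \<sigma> m w wt j i)"

definition inner_index where
  "inner_index \<phi> grad \<sigma> m w wt j = (LEAST i. i \<ge> 1 \<and> accepted \<phi> grad \<sigma> m w wt j i)"

definition reached where
  "reached \<phi> grad \<sigma> m w wt j \<longleftrightarrow> (\<forall>k<j. inner_terminates \<phi> grad \<sigma> m w wt k)"

text \<open>(w, wt, g0) is a run of Algorithm 1 (no termination test) started at w 0:
  w j are the outer iterates, wt j i = w^{j,i} (i \<ge> 1) the inner trial points,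
  g0 j = gamma_j^0.  Constraints are imposed only on quantities actually computed.\<close>
definition alg_run ::
  "('a::euclidean_space \<Rightarrow> real) \<Rightarrow> ('a \<Rightarrow> 'a) \<Rightarrow> 'a set \<Rightarrow> real \<Rightarrow> real \<Rightarrow> real \<Rightarrow> real \<Rightarrow> nat
   \<Rightarrow> (nat \<Rightarrow> 'a) \<Rightarrow> (nat \<Rightarrow> nat \<Rightarrow> 'a) \<Rightarrow> (nat \<Rightarrow> real) \<Rightarrow> bool" where
  "alg_run \<phi> grad D \<tau> \<sigma> gmin gmax m w wt g0 \<longleftrightarrow>
     w 0 \<in> D \<and>
     (\<forall>j. reached \<phi> grad \<sigma> m w wt j \<longrightarrow>
        g0 j \<in> {gmin..gmax} \<and>
        (\<forall>i\<ge>1. (\<forall>i'. 1 \<le> i' \<and> i' < i \<longrightarrow> \<not> accepted \<phi> grad \<sigma> m w wt j i') \<longrightarrow>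
                 solves_Q \<phi> grad D (w j) (gam \<tau> g0 j i) (wt j i)) \<and>
        (inner_terminates \<phi> grad \<sigma> m w wt j \<longrightarrow>
           w (Suc j) = wt j (inner_index \<phi> grad \<sigma> m w wt j)))"

end

theory Submission
  imports Defs
begin


lemma proj_shrink:
  fixes D :: "'a::euclidean_space set"
  assumes z: "z \<in> proj D y" and t: "0 < t" "t \<le> 1"
  shows "z \<in> proj D (z + t *\<^sub>R (y - z))"
proof -
  have zD: "z \<in> D" and zmin: "\<And>u. u \<in> D \<Longrightarrow> dist y z \<le> dist y u" using z by (auto simp: proj_def)
  { fix u assume u: "u \<in> D"
    have e1: "dist (z + t *\<^sub>R (y - z)) z = t * dist y z"
      by (simp add: dist_norm t(1) less_imp_le)
    have e2: "dist y (z + t *\<^sub>R (y - z)) = (1 - t) * dist y z"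
    proof -
      have "y - (z + t *\<^sub>R (y - z)) = (1 - t) *\<^sub>R (y - z)" by (simp add: algebra_simps)
      then show ?thesis using t by (simp add: dist_norm)
    qed
    have "dist y u \<le> dist y (z + t *\<^sub>R (y - z)) + dist (z + t *\<^sub>R (y - z)) u"
      by (rule dist_triangle)
    hence "dist (z + t *\<^sub>R (y - z)) z \<le> dist (z + t *\<^sub>R (y - z)) u"
      using zmin[OF u] e1 e2 by (simp add: algebra_simps dist_commute)
  }
  then show ?thesis using zD by (auto simp: proj_def)
qed

lemma solvesQ_D: "solves_Q \<phi> grad D wj g x \<Longrightarrow> x \<in> D"
  by (simp add: solves_Q_def)

lemma solvesQ_proj:
  fixes D :: "'a::euclidean_space set"
  assumes Q: "solves_Q \<phi> grad D wj g x" and g: "g > 0"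
  shows "x \<in> proj D (wj - (1/g) *\<^sub>R grad wj)"
proof -
  let ?c = "wj - (1/g) *\<^sub>R grad wj"
  have key: "(dist ?c u)\<^sup>2 = (2/g) * (grad wj \<bullet> (u - wj) + g/2 * (norm (u - wj))\<^sup>2) + (norm ((1/g) *\<^sub>R grad wj))\<^sup>2" for u
  proof -
    have "?c - u = - ((u - wj) + (1/g) *\<^sub>R grad wj)" by (simp add: algebra_simps)
    hence "dist ?c u = norm ((u - wj) + (1/g) *\<^sub>R grad wj)" by (metis dist_norm norm_minus_cancel)
    hence "(dist ?c u)\<^sup>2 = ((u - wj) + (1/g) *\<^sub>R grad wj) \<bullet> ((u - wj) + (1/g) *\<^sub>R grad wj)"
      by (simp add: power2_norm_eq_inner)
    also have "\<dots> = (u - wj) \<bullet> (u - wj) + 2 * ((1/g) * (grad wj \<bullet> (u - wj))) + ((1/g) *\<^sub>R grad wj) \<bullet> ((1/g) *\<^sub>R grad wj)"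
      by (simp add: inner_add_left inner_add_right inner_commute)
    also have "\<dots> = (2/g) * (grad wj \<bullet> (u - wj) + g/2 * (norm (u - wj))\<^sup>2) + (norm ((1/g) *\<^sub>R grad wj))\<^sup>2"
      using g by (simp add: dot_square_norm) (simp add: field_simps power2_eq_square)
    finally show ?thesis .
  qed
  have "x \<in> D" using Q by (simp add: solves_Q_def)
  moreover have "dist ?c x \<le> dist ?c u" if "u \<in> D" for u
  proof -
    have "grad wj \<bullet> (x - wj) + g/2 * (norm (x - wj))\<^sup>2 \<le> grad wj \<bullet> (u - wj) + g/2 * (norm (u - wj))\<^sup>2"
      using Q that by (simp add: solves_Q_def)
    hence "(2/g) * (grad wj \<bullet> (x - wj) + g/2 * (norm (x - wj))\<^sup>2) \<le> (2/g) * (grad wj \<bullet> (u - wj) + g/2 * (norm (u - wj))\<^sup>2)"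
      apply (rule mult_left_mono) using g by auto
    hence "(dist ?c x)\<^sup>2 \<le> (dist ?c u)\<^sup>2" using key[of x] key[of u] by linarith
    thus ?thesis by (rule power2_le_imp_le) simp
  qed
  ultimately show ?thesis by (simp add: proj_def)
qed




lemma descent:
  assumes Q: "solves_Q \<phi> grad D wj g x" and wD: "wj \<in> D"
  shows "grad wj \<bullet> (x - wj) + g/2 * (norm (x - wj))\<^sup>2 \<le> 0"
proof -
  have "\<phi> wj + grad wj \<bullet> (x - wj) + g/2 * (norm (x - wj))\<^sup>2
        \<le> \<phi> wj + grad wj \<bullet> (wj - wj) + g/2 * (norm (wj - wj))\<^sup>2"
    using Q wD unfolding solves_Q_def by blast
  thus ?thesis by simp
qed

lemma bound:
  assumes Q: "solves_Q \<phi> grad D wj g x" and wD: "wj \<in> D" and g: "g > 0"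
  shows "g * norm (x - wj) \<le> 2 * norm (grad wj)"
proof -
  have d: "grad wj \<bullet> (x - wj) + g/2 * (norm (x - wj))\<^sup>2 \<le> 0" by (rule descent[OF Q wD])
  have "- (grad wj \<bullet> (x - wj)) \<le> norm (grad wj) * norm (x - wj)"
    by (metis Cauchy_Schwarz_ineq2 abs_le_iff)
  hence "g/2 * (norm (x - wj))\<^sup>2 \<le> norm (grad wj) * norm (x - wj)" using d by linarith
  hence "(g * norm (x - wj)) * norm (x - wj) \<le> (2 * norm (grad wj)) * norm (x - wj)"
    by (simp add: power2_eq_square algebra_simps)
  thus ?thesis
    by (cases "norm (x - wj) = 0") (auto simp: mult_le_cancel_right g)
qed

lemma mono_step:
  assumes Q1: "solves_Q \<phi> grad D wj g1 x1" and Q2: "solves_Q \<phi> grad D wj g2 x2"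
    and g: "g1 < g2"
  shows "norm (x2 - wj) \<le> norm (x1 - wj)"
proof -
  have x1: "x1 \<in> D" and x2: "x2 \<in> D" using Q1 Q2 by (auto simp: solves_Q_def)
  have a: "grad wj \<bullet> (x1 - wj) + g1/2 * (norm (x1 - wj))\<^sup>2 \<le> grad wj \<bullet> (x2 - wj) + g1/2 * (norm (x2 - wj))\<^sup>2"
    using Q1 x2 by (simp add: solves_Q_def)
  have b: "grad wj \<bullet> (x2 - wj) + g2/2 * (norm (x2 - wj))\<^sup>2 \<le> grad wj \<bullet> (x1 - wj) + g2/2 * (norm (x1 - wj))\<^sup>2"
    using Q2 x1 by (simp add: solves_Q_def)
  from a b have "(g2 - g1) * (norm (x2 - wj))\<^sup>2 \<le> (g2 - g1) * (norm (x1 - wj))\<^sup>2"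
    by (simp add: algebra_simps)
  moreover have "g2 - g1 > 0" using g by simp
  ultimately have "(norm (x2 - wj))\<^sup>2 \<le> (norm (x1 - wj))\<^sup>2" by simp
  thus ?thesis by (rule power2_le_imp_le) simp
qed




lemma reject:
  fixes \<phi> :: "'a::euclidean_space \<Rightarrow> real"
  assumes deriv: "\<And>x. (\<phi> has_derivative (\<lambda>h. grad x \<bullet> h)) (at x)"
    and Q: "solves_Q \<phi> grad D wj g x" and wD: "wj \<in> D" and g: "g > 0" and sig: "\<sigma> < 1"
    and rej: "\<phi> x > \<phi> wj + \<sigma> * (grad wj \<bullet> (x - wj))"
  shows "\<exists>\<xi>\<in>closed_segment wj x. (1 - \<sigma>) * g * norm (x - wj) \<le> 2 * norm (grad \<xi> - grad wj)"
proof -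
  define d where "d = x - wj"
  have der: "((\<lambda>t. \<phi> (wj + t *\<^sub>R d)) has_derivative (\<lambda>h. grad (wj + t *\<^sub>R d) \<bullet> (h *\<^sub>R d))) (at t within {0..1})" for t
  proof -
    have "((\<lambda>t. wj + t *\<^sub>R d) has_derivative (\<lambda>h. h *\<^sub>R d)) (at t within {0..1})"
      by (auto intro!: derivative_eq_intros)
    from has_derivative_compose[OF this deriv] show ?thesis by simp
  qed
  obtain t where t: "t \<in> {0..1}" and mv: "\<phi> (wj + 1 *\<^sub>R d) - \<phi> (wj + 0 *\<^sub>R d) = grad (wj + t *\<^sub>R d) \<bullet> ((1 - 0) *\<^sub>R d)"
    using mvt_very_simple[of 0 1 "\<lambda>t. \<phi> (wj + t *\<^sub>R d)" "\<lambda>t h. grad (wj + t *\<^sub>R d) \<bullet> (h *\<^sub>R d)"] der by auto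
  define \<xi> where "\<xi> = wj + t *\<^sub>R d"
  have xiseg: "\<xi> \<in> closed_segment wj x"
  proof -
    have "\<xi> = (1 - t) *\<^sub>R wj + t *\<^sub>R x" by (simp add: \<xi>_def d_def algebra_simps)
    thus ?thesis using t by (auto simp: closed_segment_def)
  qed
  have mv2: "\<phi> x - \<phi> wj = grad \<xi> \<bullet> d" using mv by (simp add: \<xi>_def d_def)
  have desc: "grad wj \<bullet> d + g/2 * (norm d)\<^sup>2 \<le> 0" using descent[OF Q wD] by (simp add: d_def)
  have r2: "grad \<xi> \<bullet> d > \<sigma> * (grad wj \<bullet> d)" using rej mv2 by (simp add: d_def)
  have "(grad \<xi> - grad wj) \<bullet> d > (\<sigma> - 1) * (grad wj \<bullet> d)" using r2 by (simp add: inner_diff_left algebra_simps)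
  moreover have "(\<sigma> - 1) * (grad wj \<bullet> d) \<ge> (1 - \<sigma>) * (g/2 * (norm d)\<^sup>2)"
  proof -
    have "(1 - \<sigma>) * (g/2 * (norm d)\<^sup>2) \<le> (1 - \<sigma>) * (- (grad wj \<bullet> d))"
      using desc sig by (intro mult_left_mono) auto
    thus ?thesis by (simp add: algebra_simps)
  qed
  moreover have "(grad \<xi> - grad wj) \<bullet> d \<le> norm (grad \<xi> - grad wj) * norm d"
    by (rule norm_cauchy_schwarz)
  ultimately have lt0: "(1 - \<sigma>) * (g/2 * (norm d)\<^sup>2) < norm (grad \<xi> - grad wj) * norm d"
    by linarith
  have "((1 - \<sigma>) * g / 2 * norm d) * norm d = (1 - \<sigma>) * (g/2 * (norm d)\<^sup>2)"
    by (simp add: power2_eq_square)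
  with lt0 have lt: "((1 - \<sigma>) * g / 2 * norm d) * norm d < norm (grad \<xi> - grad wj) * norm d"
    by linarith
  hence "norm d \<noteq> 0" by auto
  hence "norm d > 0" by simp
  with lt have "(1 - \<sigma>) * g / 2 * norm d < norm (grad \<xi> - grad wj)" by simp
  hence "(1 - \<sigma>) * g * norm d \<le> 2 * norm (grad \<xi> - grad wj)" by simp
  thus ?thesis using xiseg by (auto simp: d_def)
qed

lemma lim_normal_seq:
  fixes D :: "'a::euclidean_space set"
  assumes z: "\<And>k. z k \<in> proj D (y k)" and c: "\<And>k. c k > 0"
    and zl: "z \<longlonglongrightarrow> wbar" and vl: "(\<lambda>k. c k *\<^sub>R (y k - z k)) \<longlonglongrightarrow> v"
  shows "v \<in> lim_normal D wbar"
proof -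
  define t where "t k = inverse (real (Suc k) * (1 + norm (y k - z k)))" for k
  have tpos: "t k > 0" for k by (simp add: t_def add_pos_nonneg)
  have tle: "t k \<le> 1" for k
  proof -
    have "1 \<le> real (Suc k) * (1 + norm (y k - z k))"
      using mult_mono[of 1 "real (Suc k)" 1 "1 + norm (y k - z k)"] by simp
    thus ?thesis unfolding t_def by (meson inverse_le_1_iff)
  qed
  define xs where "xs k = z k + t k *\<^sub>R (y k - z k)" for k
  have nb: "norm (t k *\<^sub>R (y k - z k)) \<le> inverse (real (Suc k))" for k
  proof -
    have "norm (t k *\<^sub>R (y k - z k)) = norm (y k - z k) / (real (Suc k) * (1 + norm (y k - z k)))"
      using tpos[of k] by (simp add: t_def divide_inverse)
    also have "\<dots> \<le> (1 + norm (y k - z k)) / (real (Suc k) * (1 + norm (y k - z k)))"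
      by (intro divide_right_mono) (auto simp: add_pos_nonneg)
    also have "\<dots> = inverse (real (Suc k))"
    proof -
      have "1 + norm (y k - z k) > 0" by (simp add: add_pos_nonneg)
      thus ?thesis by (simp add: divide_inverse)
    qed
    finally show ?thesis .
  qed
  have "(\<lambda>k. t k *\<^sub>R (y k - z k)) \<longlonglongrightarrow> 0"
    by (rule Lim_null_comparison[OF _ LIMSEQ_inverse_real_of_nat]) (use nb in auto)
  hence xl: "xs \<longlonglongrightarrow> wbar" unfolding xs_def using tendsto_add[OF zl] by fastforce
  have "c k *\<^sub>R (y k - z k) \<in> proj_cone D (xs k)" for k
  proof -
    have "c k *\<^sub>R (y k - z k) = (c k / t k) *\<^sub>R (xs k - z k)" using tpos[of k] by (simp add: xs_def)
    moreover have "z k \<in> proj D (xs k)" unfolding xs_def by (rule proj_shrink[OF z tpos tle])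
    moreover have "c k / t k \<ge> 0" using c[of k] tpos[of k] by simp
    ultimately show ?thesis unfolding proj_cone_def by blast
  qed
  thus ?thesis unfolding lim_normal_def using xl vl by blast
qed




locale alg =
  fixes \<phi> :: "'a::euclidean_space \<Rightarrow> real" and grad :: "'a \<Rightarrow> 'a"
    and D :: "'a set" and \<tau> \<sigma> gmin gmax :: real and m :: nat
    and w :: "nat \<Rightarrow> 'a" and wt :: "nat \<Rightarrow> nat \<Rightarrow> 'a" and g0 :: "nat \<Rightarrow> real"
  assumes deriv: "\<And>x. (\<phi> has_derivative (\<lambda>h. grad x \<bullet> h)) (at x)"
    and grad_cont: "continuous_on UNIV grad"
    and D_closed: "closed D" and D_ne: "D \<noteq> {}"
    and tau: "\<tau> > 1" and sigma: "0 < \<sigma>" "\<sigma> < 1"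
    and gams: "0 < gmin" "gmin \<le> gmax"
    and run: "alg_run \<phi> grad D \<tau> \<sigma> gmin gmax m w wt g0"
    and sublevel: "bounded {v \<in> D. \<phi> v \<le> \<phi> (w 0)}"
begin

abbreviation "acc j i \<equiv> accepted \<phi> grad \<sigma> m w wt j i"
abbreviation "tm j \<equiv> inner_terminates \<phi> grad \<sigma> m w wt j"
abbreviation "rch j \<equiv> reached \<phi> grad \<sigma> m w wt j"
abbreviation "ii j \<equiv> inner_index \<phi> grad \<sigma> m w wt j"
abbreviation "gm j i \<equiv> gam \<tau> g0 j i"
abbreviation "Mx j \<equiv> Max ((\<lambda>r. \<phi> (w (j - r))) ` {0..min j m})"

lemma rch_Suc: "rch (Suc j) \<longleftrightarrow> rch j \<and> tm j"
  unfolding reached_def using less_Suc_eq by auto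

lemma rch_le: "rch j \<Longrightarrow> k \<le> j \<Longrightarrow> rch k"
  unfolding reached_def by auto

lemma run_at:
  assumes "rch j"
  shows "g0 j \<in> {gmin..gmax}"
    and "\<And>i. 1 \<le> i \<Longrightarrow> (\<forall>i'. 1 \<le> i' \<and> i' < i \<longrightarrow> \<not> acc j i') \<Longrightarrow> solves_Q \<phi> grad D (w j) (gm j i) (wt j i)"
    and "tm j \<Longrightarrow> w (Suc j) = wt j (ii j)"
  using run assms unfolding alg_run_def by blast+

lemma ii_props:
  assumes "tm j"
  shows "ii j \<ge> 1" "acc j (ii j)" "\<And>i'. 1 \<le> i' \<Longrightarrow> i' < ii j \<Longrightarrow> \<not> acc j i'"
proof -
  have ex: "\<exists>i. i \<ge> 1 \<and> acc j i" using assms unfolding inner_terminates_def by auto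
  show "ii j \<ge> 1" "acc j (ii j)" unfolding inner_index_def using LeastI_ex[OF ex] by auto
  show "\<And>i'. 1 \<le> i' \<Longrightarrow> i' < ii j \<Longrightarrow> \<not> acc j i'" unfolding inner_index_def
    using not_less_Least by blast
qed

lemma gm_ge: "rch j \<Longrightarrow> gm j i \<ge> g0 j"
proof -
  assume "rch j"
  hence "g0 j \<ge> gmin" using run_at(1) by auto
  hence "g0 j \<ge> 0" using gams by simp
  moreover have "\<tau> ^ (i - 1) \<ge> 1" using tau by simp
  ultimately show ?thesis unfolding gam_def using mult_right_mono[of 1 "\<tau> ^ (i - 1)" "g0 j"] by simp
qed

lemma gm_pos: "rch j \<Longrightarrow> gm j i \<ge> gmin"
proof -
  assume a: "rch j"
  show ?thesis using gm_ge[OF a, of i] run_at(1)[OF a] by auto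
qed

lemma gm_pos': "rch j \<Longrightarrow> gm j i > 0"
proof -
  assume a: "rch j"
  show ?thesis using gm_pos[OF a, of i] gams by auto
qed

lemma solves_acc: "rch j \<Longrightarrow> tm j \<Longrightarrow> solves_Q \<phi> grad D (w j) (gm j (ii j)) (w (Suc j))"
  using run_at(2)[of j "ii j"] run_at(3)[of j] ii_props[of j] by auto

lemma solves_before: "rch j \<Longrightarrow> tm j \<Longrightarrow> 1 \<le> i \<Longrightarrow> i < ii j \<Longrightarrow> solves_Q \<phi> grad D (w j) (gm j i) (wt j i)"
  using run_at(2)[of j i] ii_props(3)[of j] by auto

lemma wD: "rch j \<Longrightarrow> w j \<in> D"
proof (induction j)
  case 0
  then show ?case using run by (simp add: alg_run_def)
next
  case (Suc j)
  then show ?case using rch_Suc solves_acc solvesQ_D by blast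
qed

lemma Mx_ge: "\<phi> (w j) \<le> Mx j"
  by (rule Max_ge) (auto intro: image_eqI[where x=0])

lemma rejected: "\<not> acc j i \<Longrightarrow> \<phi> (wt j i) > \<phi> (w j) + \<sigma> * (grad (w j) \<bullet> (wt j i - w j))"
  using Mx_ge[of j] unfolding accepted_def by linarith

lemma gm_Suc: "gm j (Suc i) = \<tau> * gm j i" if "i \<ge> 1"
  using that unfolding gam_def by (cases i) auto

end



context alg begin

lemma partA: "(\<exists>j. rch j \<and> \<not> tm j) \<longleftrightarrow> \<not> (\<forall>j. tm j)"
proof
  assume "\<exists>j. rch j \<and> \<not> tm j" thus "\<not> (\<forall>j. tm j)" by auto
next
  assume "\<not> (\<forall>j. tm j)"
  then obtain j where j: "\<not> tm j" by auto
  define j0 where "j0 = (LEAST j. \<not> tm j)"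
  have "\<not> tm j0" unfolding j0_def by (rule LeastI[of _ j]) (rule j)
  moreover have "rch j0" unfolding reached_def j0_def using not_less_Least by blast
  ultimately show "\<exists>j. rch j \<and> \<not> tm j" by blast
qed

lemma caseI:
  assumes rj: "rch j" and nt: "\<not> tm j"
  shows "(\<lambda>i. wt j i) \<longlonglongrightarrow> w j" "M_stationary grad D (w j)"
    "(\<lambda>i. norm (gm j i *\<^sub>R (w j - wt j i) + grad (wt j i) - grad (w j))) \<longlonglongrightarrow> 0"
proof -
  have rej: "\<And>i. 1 \<le> i \<Longrightarrow> \<not> acc j i" using nt unfolding inner_terminates_def by auto
  have Q: "\<And>i. 1 \<le> i \<Longrightarrow> solves_Q \<phi> grad D (w j) (gm j i) (wt j i)"
    using run_at(2)[OF rj] rej by auto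
  have wjD: "w j \<in> D" by (rule wD[OF rj])
  have gpos: "\<And>i. gm j i > 0" by (rule gm_pos'[OF rj])
  have g0pos: "g0 j > 0" using run_at(1)[OF rj] gams by auto
  define C where "C = 2 * norm (grad (w j)) / g0 j"
  have bnd: "norm (wt j i - w j) \<le> C * inverse \<tau> ^ (i - 1)" if "i \<ge> 1" for i
  proof -
    have "gm j i * norm (wt j i - w j) \<le> 2 * norm (grad (w j))" by (rule bound[OF Q[OF that] wjD gpos])
    hence "norm (wt j i - w j) \<le> 2 * norm (grad (w j)) / gm j i" using gpos[of i] by (simp add: field_simps)
    also have "\<dots> = C * inverse \<tau> ^ (i - 1)" unfolding C_def gam_def
      by (simp add: power_inverse divide_inverse inverse_mult_distrib)
    finally show ?thesis .
  qed
  have "(\<lambda>i. C * inverse \<tau> ^ i) \<longlonglongrightarrow> 0"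
    by (intro tendsto_mult_right_zero LIMSEQ_power_zero) (use tau in \<open>simp add: inverse_less_1_iff\<close>)
  hence "(\<lambda>i. C * inverse \<tau> ^ (Suc i - 1)) \<longlonglongrightarrow> 0" by simp
  hence lim0: "(\<lambda>i. C * inverse \<tau> ^ (i - 1)) \<longlonglongrightarrow> 0" by (rule LIMSEQ_imp_Suc)
  have "(\<lambda>i. wt j i - w j) \<longlonglongrightarrow> 0"
  proof (rule Lim_null_comparison[OF _ lim0])
    show "\<forall>\<^sub>F i in sequentially. norm (wt j i - w j) \<le> C * inverse \<tau> ^ (i - 1)"
      using bnd unfolding eventually_sequentially by blast
  qed
  hence dlim: "(\<lambda>i. norm (wt j i - w j)) \<longlonglongrightarrow> 0" using tendsto_norm_zero by blast
  show wlim: "(\<lambda>i. wt j i) \<longlonglongrightarrow> w j" using \<open>(\<lambda>i. wt j i - w j) \<longlonglongrightarrow> 0\<close> by (simp add: LIM_zero_iff)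
  have isc: "isCont grad x" for x using grad_cont by (simp add: continuous_on_eq_continuous_at)
  define q where "q i = gm j i * norm (wt j i - w j)" for i
  have qlim: "q \<longlonglongrightarrow> 0"
    unfolding LIMSEQ_iff
  proof (intro allI impI)
    fix \<epsilon> :: real assume eps: "\<epsilon> > 0"
    have "\<epsilon> * (1 - \<sigma>) / 2 > 0" using eps sigma by simp
    then obtain \<delta> where dpos: "\<delta> > 0" and dl: "\<And>x'. dist x' (w j) < \<delta> \<Longrightarrow> dist (grad x') (grad (w j)) < \<epsilon> * (1 - \<sigma>) / 2"
      using isc[of "w j"] unfolding continuous_at_eps_delta by blast
    obtain N where N: "\<And>n. n \<ge> N \<Longrightarrow> norm (norm (wt j n - w j) - 0) < \<delta>"
      using dlim dpos unfolding LIMSEQ_iff by blast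
    show "\<exists>no. \<forall>n\<ge>no. norm (q n - 0) < \<epsilon>"
    proof (intro exI allI impI)
      fix n assume n: "max N 1 \<le> n"
      obtain \<xi> where xs: "\<xi> \<in> closed_segment (w j) (wt j n)"
        and ineq: "(1 - \<sigma>) * gm j n * norm (wt j n - w j) \<le> 2 * norm (grad \<xi> - grad (w j))"
        using reject[OF deriv Q wjD gpos sigma(2) rejected[OF rej]] n by fastforce
      have "norm (\<xi> - w j) \<le> norm (wt j n - w j)" using segment_bound1[OF xs] .
      also have "\<dots> < \<delta>" using N[of n] n by simp
      finally have "dist (grad \<xi>) (grad (w j)) < \<epsilon> * (1 - \<sigma>) / 2" using dl by (simp add: dist_norm)
      hence "2 * norm (grad \<xi> - grad (w j)) < \<epsilon> * (1 - \<sigma>)" by (simp add: dist_norm)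
      hence "(1 - \<sigma>) * gm j n * norm (wt j n - w j) < (1 - \<sigma>) * \<epsilon>" using ineq by (simp add: mult.commute)
      hence "(1 - \<sigma>) * q n < (1 - \<sigma>) * \<epsilon>" by (simp add: q_def mult.assoc)
      hence "q n < \<epsilon>" using sigma by simp
      moreover have "q n \<ge> 0" using gpos[of n] by (simp add: q_def)
      ultimately show "norm (q n - 0) < \<epsilon>" by simp
    qed
  qed
  have glim: "(\<lambda>i. grad (wt j i)) \<longlonglongrightarrow> grad (w j)" by (rule isCont_tendsto_compose[OF isc wlim])
  hence "(\<lambda>i. norm (grad (wt j i) - grad (w j))) \<longlonglongrightarrow> 0"
    using LIM_zero tendsto_norm_zero by blast
  hence sumlim: "(\<lambda>i. q i + norm (grad (wt j i) - grad (w j))) \<longlonglongrightarrow> 0"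
    using tendsto_add_zero[OF qlim] by blast
  show "(\<lambda>i. norm (gm j i *\<^sub>R (w j - wt j i) + grad (wt j i) - grad (w j))) \<longlonglongrightarrow> 0"
  proof (rule Lim_null_comparison[OF _ sumlim], rule always_eventually, intro allI)
    fix i
    have "norm (gm j i *\<^sub>R (w j - wt j i) + grad (wt j i) - grad (w j))
        \<le> norm (gm j i *\<^sub>R (w j - wt j i)) + norm (grad (wt j i) - grad (w j))"
      using norm_triangle_ineq[of "gm j i *\<^sub>R (w j - wt j i)" "grad (wt j i) - grad (w j)"]
      by (simp add: algebra_simps)
    also have "norm (gm j i *\<^sub>R (w j - wt j i)) = q i"
      using gpos[of i] by (simp add: q_def norm_minus_commute)
    finally show "norm (norm (gm j i *\<^sub>R (w j - wt j i) + grad (wt j i) - grad (w j)))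
        \<le> q i + norm (grad (wt j i) - grad (w j))" by simp
  qed
  have vlim0: "(\<lambda>k. gm j (Suc k) *\<^sub>R (w j - wt j (Suc k))) \<longlonglongrightarrow> 0"
  proof -
    have "(\<lambda>k. q (Suc k)) \<longlonglongrightarrow> 0" using qlim by (rule LIMSEQ_Suc)
    moreover have "q (Suc k) = norm (gm j (Suc k) *\<^sub>R (w j - wt j (Suc k)))" for k
      using gpos[of "Suc k"] by (simp add: q_def norm_minus_commute)
    ultimately show ?thesis using tendsto_norm_zero_iff by fastforce
  qed
  have eq: "gm j (Suc k) *\<^sub>R ((w j - (1 / gm j (Suc k)) *\<^sub>R grad (w j)) - wt j (Suc k))
           = gm j (Suc k) *\<^sub>R (w j - wt j (Suc k)) - grad (w j)" for k
    using gpos[of "Suc k"] by (simp add: algebra_simps)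
  have "(\<lambda>k. gm j (Suc k) *\<^sub>R ((w j - (1 / gm j (Suc k)) *\<^sub>R grad (w j)) - wt j (Suc k))) \<longlonglongrightarrow> - grad (w j)"
    unfolding eq using tendsto_diff[OF vlim0 tendsto_const[of "grad (w j)"]] by simp
  note vl = this
  have sQ: "wt j (Suc k) \<in> proj D (w j - (1 / gm j (Suc k)) *\<^sub>R grad (w j))" for k
    by (rule solvesQ_proj[OF Q gpos]) simp
  have "- grad (w j) \<in> lim_normal D (w j)"
    using lim_normal_seq[of "\<lambda>k. wt j (Suc k)" D "\<lambda>k. w j - (1 / gm j (Suc k)) *\<^sub>R grad (w j)"
        "\<lambda>k. gm j (Suc k)" "w j" "- grad (w j)"] sQ gpos LIMSEQ_Suc[OF wlim] vl by blast
  moreover have "grad (w j) + - grad (w j) = 0" by simp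
  ultimately show "M_stationary grad D (w j)" unfolding M_stationary_def using wjD by blast
qed

end



locale alg2 = alg + assumes allt: "\<And>j. inner_terminates \<phi> grad \<sigma> m w wt j"
begin

lemma rch_all: "rch j" unfolding reached_def using allt by simp

definition dd where "dd j = w (Suc j) - w j"
definition gg where "gg j = gm j (ii j)"
definition SS where "SS = {v \<in> D. \<phi> v \<le> \<phi> (w 0)}"

lemma phi_cont: "continuous_on UNIV \<phi>"
  using deriv has_derivative_continuous continuous_at_imp_continuous_on by blast

lemma SS_compact: "compact SS"
proof -
  have "closed {v. \<phi> v \<le> \<phi> (w 0)}" by (rule closed_Collect_le[OF phi_cont continuous_on_const])
  hence "closed SS" unfolding SS_def using D_closed closed_Int[of D "{v. \<phi> v \<le> \<phi> (w 0)}"]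
    by (simp add: Int_def)
  thus ?thesis using sublevel unfolding SS_def by (simp add: compact_eq_bounded_closed)
qed

lemma Qacc: "solves_Q \<phi> grad D (w j) (gg j) (w (Suc j))"
  unfolding gg_def by (rule solves_acc[OF rch_all allt])

lemma gg_ge: "gg j \<ge> gmin" unfolding gg_def by (rule gm_pos[OF rch_all])
lemma gg_pos: "gg j > 0" using gg_ge gams by (meson less_le_trans)

lemma wD': "w j \<in> D" by (rule wD[OF rch_all])

lemma C1: "\<phi> (w (Suc j)) \<le> Mx j - (\<sigma> * gmin / 2) * (norm (dd j))\<^sup>2"
proof -
  have a: "\<phi> (w (Suc j)) \<le> Mx j + \<sigma> * (grad (w j) \<bullet> dd j)"
    using ii_props(2)[OF allt[of j]] run_at(3)[OF rch_all allt[of j]]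
    unfolding accepted_def dd_def by simp
  have "grad (w j) \<bullet> dd j + gg j / 2 * (norm (dd j))\<^sup>2 \<le> 0"
    using descent[OF Qacc wD'] unfolding dd_def .
  moreover have "gmin / 2 * (norm (dd j))\<^sup>2 \<le> gg j / 2 * (norm (dd j))\<^sup>2"
    using gg_ge[of j] by (intro mult_right_mono) auto
  ultimately have "grad (w j) \<bullet> dd j \<le> - (gmin / 2 * (norm (dd j))\<^sup>2)" by linarith
  hence "\<sigma> * (grad (w j) \<bullet> dd j) \<le> \<sigma> * (- (gmin / 2 * (norm (dd j))\<^sup>2))"
    using sigma by (intro mult_left_mono) auto
  with a show ?thesis by simp
qed

lemma C1': "\<phi> (w (Suc j)) \<le> Mx j"
proof -
  have "0 \<le> (\<sigma> * gmin / 2) * (norm (dd j))\<^sup>2" using sigma gams by simp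
  thus ?thesis using C1[of j] by linarith
qed

lemma inS: "w j \<in> SS"
proof (induction j rule: less_induct)
  case (less j)
  show ?case
  proof (cases j)
    case 0
    then show ?thesis using wD' by (simp add: SS_def)
  next
    case (Suc j')
    have hM: "Mx j' \<le> \<phi> (w 0)"
    proof (subst Max_le_iff, simp, simp, intro ballI)
      fix a assume "a \<in> (\<lambda>r. \<phi> (w (j' - r))) ` {0..min j' m}"
      then obtain r where a: "a = \<phi> (w (j' - r))" by auto
      have "j' - r < j" using Suc by simp
      thus "a \<le> \<phi> (w 0)" using less.IH a by (simp add: SS_def)
    qed
    have "\<phi> (w (Suc j')) \<le> \<phi> (w 0)" using C1'[of j'] hM by linarith
    thus ?thesis using wD' Suc by (simp add: SS_def)
  qed
qed

lemma Mx_dec: "Mx (Suc j) \<le> Mx j"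
proof (subst Max_le_iff, simp, simp, intro ballI)
  fix a assume "a \<in> (\<lambda>r. \<phi> (w (Suc j - r))) ` {0..min (Suc j) m}"
  then obtain r where r: "r \<le> min (Suc j) m" and a: "a = \<phi> (w (Suc j - r))" by auto
  show "a \<le> Mx j"
  proof (cases r)
    case 0 thus ?thesis using a C1' by simp
  next
    case (Suc r')
    hence "Suc j - r = j - r'" "r' \<in> {0..min j m}" using r by auto
    thus ?thesis using a by (auto intro!: Max_ge)
  qed
qed

lemma Mx_anti: "a \<le> b \<Longrightarrow> Mx b \<le> Mx a"
  using lift_Suc_antimono_le[of "\<lambda>j. Mx j", OF Mx_dec] by blast

lemma Mx_conv: obtains L where "(\<lambda>j. Mx j) \<longlonglongrightarrow> L" "\<And>i. L \<le> Mx i"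
proof -
  obtain x0 where x0: "x0 \<in> SS" "\<And>y. y \<in> SS \<Longrightarrow> \<phi> x0 \<le> \<phi> y"
    using continuous_attains_inf[OF SS_compact _ continuous_on_subset[OF phi_cont]] inS by blast
  have "\<forall>i. \<phi> x0 \<le> Mx i" using x0(2)[OF inS] Mx_ge order_trans by blast
  moreover have "decseq (\<lambda>j. Mx j)" using Mx_dec by (simp add: decseq_Suc_iff)
  ultimately show ?thesis using decseq_convergent[of "\<lambda>j. Mx j" "\<phi> x0"] that by blast
qed

end



context alg2 begin

lemma l_ex: "\<exists>l. \<forall>j. j - min j m \<le> l j \<and> l j \<le> j \<and> \<phi> (w (l j)) = Mx j"
proof -
  have "\<forall>j. \<exists>k. j - min j m \<le> k \<and> k \<le> j \<and> \<phi> (w k) = Mx j"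
  proof
    fix j
    have "Mx j \<in> (\<lambda>r. \<phi> (w (j - r))) ` {0..min j m}" by (rule Max_in) auto
    then obtain r where "r \<in> {0..min j m}" "Mx j = \<phi> (w (j - r))" by blast
    thus "\<exists>k. j - min j m \<le> k \<and> k \<le> j \<and> \<phi> (w k) = Mx j" by (intro exI[of _ "j - r"]) auto
  qed
  thus ?thesis by metis
qed

lemma d_lim: "(\<lambda>j. norm (dd j)) \<longlonglongrightarrow> 0"
proof -
  obtain L where L: "(\<lambda>j. Mx j) \<longlonglongrightarrow> L" "\<And>i. L \<le> Mx i" using Mx_conv by blast
  obtain l where l: "\<And>j. j - min j m \<le> l j" "\<And>j. l j \<le> j" "\<And>j. \<phi> (w (l j)) = Mx j"
    using l_ex by blast
  define lJ where "lJ j = l (j + 2*m + 2)" for j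
  have lJge: "lJ j \<ge> j + m + 2" for j using l(1)[of "j+2*m+2"] unfolding lJ_def by simp
  have lJle: "lJ j \<le> j + 2*m + 2" for j using l(2) by (simp add: lJ_def)
  have ucont: "uniformly_continuous_on SS \<phi>"
    by (rule compact_uniformly_continuous[OF continuous_on_subset[OF phi_cont] SS_compact]) simp
  have c0: "\<sigma> * gmin / 2 > 0" using sigma gams by simp
  have chain: "h \<le> m + 1 \<Longrightarrow> (\<lambda>j. \<phi> (w (lJ j - h))) \<longlonglongrightarrow> L \<and>
      (\<forall>h'. 1 \<le> h' \<and> h' \<le> h \<longrightarrow> (\<lambda>j. norm (dd (lJ j - h'))) \<longlonglongrightarrow> 0)" for h
  proof (induction h)
    case 0
    have "(\<lambda>j. Mx (j + (2*m+2))) \<longlonglongrightarrow> L" by (rule LIMSEQ_ignore_initial_segment[OF L(1)])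
    moreover have "\<phi> (w (lJ j - 0)) = Mx (j + (2*m+2))" for j using l(3) by (simp add: lJ_def add.assoc)
    ultimately show ?case by simp
  next
    case (Suc h)
    hence IH: "(\<lambda>j. \<phi> (w (lJ j - h))) \<longlonglongrightarrow> L"
      "\<forall>h'. 1 \<le> h' \<and> h' \<le> h \<longrightarrow> (\<lambda>j. norm (dd (lJ j - h'))) \<longlonglongrightarrow> 0" by auto
    define k where "k j = lJ j - Suc h" for j
    have hk: "h < m+1" using Suc.prems by simp
    have kSuc: "Suc (k j) = lJ j - h" for j using lJge[of j] hk by (simp add: k_def)
    have kge: "j \<le> k j" for j using lJge[of j] hk by (simp add: k_def)
    have e1: "eventually (\<lambda>j. L \<le> Mx (k j)) sequentially" using L(2) by simp
    have e2: "eventually (\<lambda>j. Mx (k j) \<le> Mx j) sequentially" using Mx_anti[OF kge] by simp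
    have MxK: "(\<lambda>j. Mx (k j)) \<longlonglongrightarrow> L" by (rule tendsto_sandwich[OF e1 e2 tendsto_const L(1)])
    have phK: "(\<lambda>j. \<phi> (w (Suc (k j)))) \<longlonglongrightarrow> L" using IH(1) by (simp add: kSuc)
    have sq: "(\<lambda>j. (norm (dd (k j)))\<^sup>2) \<longlonglongrightarrow> 0"
    proof (rule tendsto_sandwich[of "\<lambda>_. 0" _ _ "\<lambda>j. (Mx (k j) - \<phi> (w (Suc (k j)))) / (\<sigma>*gmin/2)"])
      show "eventually (\<lambda>j. 0 \<le> (norm (dd (k j)))\<^sup>2) sequentially" by simp
      have "(norm (dd (k j)))\<^sup>2 \<le> (Mx (k j) - \<phi> (w (Suc (k j)))) / (\<sigma>*gmin/2)" for j
      proof -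
        have "(\<sigma> * gmin / 2) * (norm (dd (k j)))\<^sup>2 \<le> Mx (k j) - \<phi> (w (Suc (k j)))"
          using C1[of "k j"] by linarith
        thus ?thesis using c0 by (simp add: pos_le_divide_eq mult.commute)
      qed
      thus "eventually (\<lambda>j. (norm (dd (k j)))\<^sup>2 \<le> (Mx (k j) - \<phi> (w (Suc (k j)))) / (\<sigma>*gmin/2)) sequentially"
        by simp
      show "(\<lambda>j. 0) \<longlonglongrightarrow> (0::real)" by simp
      have "(\<lambda>j. (Mx (k j) - \<phi> (w (Suc (k j)))) / (\<sigma>*gmin/2)) \<longlonglongrightarrow> (L - L) / (\<sigma>*gmin/2)"
        using c0 by (intro tendsto_divide tendsto_diff MxK phK tendsto_const) linarith
      thus "(\<lambda>j. (Mx (k j) - \<phi> (w (Suc (k j)))) / (\<sigma>*gmin/2)) \<longlonglongrightarrow> 0" by simp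
    qed
    have dk: "(\<lambda>j. norm (dd (k j))) \<longlonglongrightarrow> 0"
    proof -
      have "(\<lambda>j. sqrt ((norm (dd (k j)))\<^sup>2)) \<longlonglongrightarrow> sqrt 0" by (intro tendsto_real_sqrt sq)
      thus ?thesis by simp
    qed
    have dist0: "(\<lambda>j. dist (w (k j)) (w (Suc (k j)))) \<longlonglongrightarrow> 0"
      using dk by (simp add: dd_def dist_norm norm_minus_commute)
    have "(\<lambda>j. dist (\<phi> (w (k j))) (\<phi> (w (Suc (k j))))) \<longlonglongrightarrow> 0"
      using ucont[unfolded uniformly_continuous_on_sequentially, rule_format,
          of "\<lambda>j. w (k j)" "\<lambda>j. w (Suc (k j))"] inS dist0 by blast
    hence df: "(\<lambda>j. \<phi> (w (k j)) - \<phi> (w (Suc (k j)))) \<longlonglongrightarrow> 0"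
      by (simp add: dist_real_def tendsto_rabs_zero_iff)
    have phk: "(\<lambda>j. \<phi> (w (k j))) \<longlonglongrightarrow> L" using tendsto_add[OF df phK] by simp
    show ?case
    proof (intro conjI allI impI)
      show "(\<lambda>j. \<phi> (w (lJ j - Suc h))) \<longlonglongrightarrow> L" using phk by (simp add: k_def)
      fix h' assume h': "1 \<le> h' \<and> h' \<le> Suc h"
      show "(\<lambda>j. norm (dd (lJ j - h'))) \<longlonglongrightarrow> 0"
      proof (cases "h' = Suc h")
        case True thus ?thesis using dk by (simp add: k_def)
      next
        case False thus ?thesis using IH(2) h' by auto
      qed
    qed
  qed
  have all: "\<forall>h'\<in>{1..m+1}. (\<lambda>j. norm (dd (lJ j - h'))) \<longlonglongrightarrow> 0" using chain[of "m+1"] by auto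
  show ?thesis
    unfolding LIMSEQ_iff
  proof (intro allI impI)
    fix r :: real assume r: "r > 0"
    have "\<forall>h'\<in>{1..m+1}. eventually (\<lambda>j. norm (dd (lJ j - h')) < r) sequentially"
      using all r order_tendstoD(2) by blast
    hence "eventually (\<lambda>j. \<forall>h'\<in>{1..m+1}. norm (dd (lJ j - h')) < r) sequentially"
      by (intro eventually_ball_finite) auto
    then obtain N where N: "\<And>j. j \<ge> N \<Longrightarrow> \<forall>h'\<in>{1..m+1}. norm (dd (lJ j - h')) < r"
      by (auto simp: eventually_sequentially)
    show "\<exists>no. \<forall>n\<ge>no. norm (norm (dd n) - 0) < r"
    proof (intro exI allI impI)
      fix n assume n: "N + m + 1 \<le> n"
      define j' where "j' = n - (m+1)"
      have j'N: "j' \<ge> N" using n by (simp add: j'_def)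
      have a1: "lJ j' \<ge> n + 1" using lJge[of j'] n by (simp add: j'_def)
      have a2: "lJ j' \<le> n + m + 1" using lJle[of j'] n by (simp add: j'_def)
      define h' where "h' = lJ j' - n"
      have "h' \<in> {1..m+1}" using a1 a2 unfolding h'_def by auto
      moreover have "lJ j' - h' = n" using a1 by (simp add: h'_def)
      ultimately have "norm (dd n) < r" using N[OF j'N] by force
      thus "norm (norm (dd n) - 0) < r" by simp
    qed
  qed
qed

end



context alg2 begin

lemma gd_lim: "(\<lambda>j. gg j * norm (dd j)) \<longlonglongrightarrow> 0"
proof -
  obtain R where Rp: "R > 0" and R: "\<And>x. x \<in> SS \<Longrightarrow> norm x \<le> R"
    using compact_imp_bounded[OF SS_compact] by (auto simp: bounded_pos)
  define T where "T = cball (0::'a) (R+1)"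
  have cgT: "continuous_on T grad" using grad_cont continuous_on_subset by blast
  have uc: "uniformly_continuous_on T grad" unfolding T_def
    by (rule compact_uniformly_continuous) (use cgT in \<open>auto simp: T_def\<close>)
  have cgS: "continuous_on SS grad" using grad_cont continuous_on_subset by blast
  have "bounded (grad ` SS)" by (rule compact_imp_bounded[OF compact_continuous_image[OF cgS SS_compact]])
  then obtain B where Bp: "B > 0" and B: "\<And>x. x \<in> SS \<Longrightarrow> norm (grad x) \<le> B"
    by (auto simp: bounded_pos)
  have key: "\<exists>G>0. \<forall>j. gg j * norm (dd j) \<le> \<tau> * G * norm (dd j) \<or> gg j * norm (dd j) \<le> \<epsilon>"
    if eps: "\<epsilon> > 0" for \<epsilon>
  proof -
    define \<eta> where "\<eta> = \<epsilon> * (1 - \<sigma>) / (2 * \<tau>)"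
    have etap: "\<eta> > 0" using eps sigma tau by (simp add: \<eta>_def)
    obtain \<delta> where dp: "\<delta> > 0"
      and dl: "\<And>x x'. x \<in> T \<Longrightarrow> x' \<in> T \<Longrightarrow> dist x' x < \<delta> \<Longrightarrow> dist (grad x') (grad x) < \<eta>"
      using uc etap unfolding uniformly_continuous_on_def by metis
    define \<delta>' where "\<delta>' = min \<delta> 1"
    define G where "G = gmax + 2 * B / \<delta>' + 1"
    have d'p: "\<delta>' > 0" using dp by (simp add: \<delta>'_def)
    have BD: "2 * B / \<delta>' > 0" using Bp d'p by simp
    have Gp: "G > 0" using gams BD by (simp add: G_def)
    have gmG: "gmax \<le> \<tau> * G"
    proof -
      have "gmax \<le> G" using BD by (simp add: G_def)
      also have "G \<le> \<tau> * G" using Gp tau by simp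
      finally show ?thesis .
    qed
    have GB: "2 * B / G < \<delta>'"
    proof -
      have "2 * B / \<delta>' < G" using gams by (simp add: G_def)
      hence "2 * B < G * \<delta>'" using d'p by (simp add: pos_divide_less_eq)
      thus ?thesis using Gp by (simp add: pos_divide_less_eq mult.commute)
    qed
    show ?thesis
    proof (intro exI conjI allI)
      show "G > 0" by (rule Gp)
      fix j
      have nd: "norm (dd j) \<ge> 0" by simp
      show "gg j * norm (dd j) \<le> \<tau> * G * norm (dd j) \<or> gg j * norm (dd j) \<le> \<epsilon>"
      proof (cases "ii j = 1")
        case True
        hence "gg j = g0 j" by (simp add: gg_def gam_def)
        also have "\<dots> \<le> gmax" using run_at(1)[OF rch_all] by auto
        also have "\<dots> \<le> \<tau> * G" by (rule gmG)
        finally show ?thesis using nd by (auto intro: mult_right_mono)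
      next
        case False
        then obtain i0 where i0: "ii j = Suc i0" "1 \<le> i0"
          using ii_props(1)[OF allt[of j]] by (cases "ii j") auto
        have ggeq: "gg j = \<tau> * gm j i0" unfolding gg_def using i0 gm_Suc by simp
        have ghp: "gm j i0 > 0" by (rule gm_pos'[OF rch_all])
        have Qh: "solves_Q \<phi> grad D (w j) (gm j i0) (wt j i0)"
          by (rule solves_before[OF rch_all allt]) (use i0 in auto)
        have rj: "\<not> acc j i0" by (rule ii_props(3)[OF allt]) (use i0 in auto)
        show ?thesis
        proof (cases "gm j i0 \<le> G")
          case True
          hence "gg j \<le> \<tau> * G" using ggeq tau by simp
          thus ?thesis using nd by (auto intro: mult_right_mono)
        next
          case False
          hence ghG: "gm j i0 > G" by simp
          have "gm j i0 * norm (wt j i0 - w j) \<le> 2 * norm (grad (w j))" by (rule bound[OF Qh wD' ghp])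
          also have "\<dots> \<le> 2 * B" using B[OF inS] by simp
          finally have "norm (wt j i0 - w j) \<le> 2 * B / gm j i0" using ghp by (simp add: pos_le_divide_eq mult.commute)
          also have "\<dots> \<le> 2 * B / G" using ghG Gp Bp by (intro divide_left_mono) auto
          finally have xhd: "norm (wt j i0 - w j) < \<delta>'" using GB by simp
          obtain \<xi> where xs: "\<xi> \<in> closed_segment (w j) (wt j i0)"
            and ineq: "(1 - \<sigma>) * gm j i0 * norm (wt j i0 - w j) \<le> 2 * norm (grad \<xi> - grad (w j))"
            using reject[OF deriv Qh wD' ghp sigma(2) rejected[OF rj]] by blast
          have "norm (\<xi> - w j) \<le> norm (wt j i0 - w j)" by (rule segment_bound1[OF xs])
          hence xid: "norm (\<xi> - w j) < \<delta>'" using xhd by simp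
          have wjR: "norm (w j) \<le> R" by (rule R[OF inS])
          have wjT: "w j \<in> T" using wjR by (simp add: T_def)
          have "norm \<xi> \<le> norm (w j) + norm (\<xi> - w j)" by (rule norm_triangle_sub)
          hence xiT: "\<xi> \<in> T" using wjR xid by (simp add: T_def \<delta>'_def)
          have "dist (grad \<xi>) (grad (w j)) < \<eta>" using dl[OF wjT xiT] xid by (simp add: dist_norm \<delta>'_def)
          hence "2 * norm (grad \<xi> - grad (w j)) < 2 * \<eta>" by (simp add: dist_norm)
          hence "(1 - \<sigma>) * gm j i0 * norm (wt j i0 - w j) < 2 * \<eta>" using ineq by linarith
          hence "\<tau> * ((1 - \<sigma>) * gm j i0 * norm (wt j i0 - w j)) < \<tau> * (2 * \<eta>)" using tau by simp
          also have "\<tau> * (2 * \<eta>) = (1 - \<sigma>) * \<epsilon>" using tau by (simp add: \<eta>_def field_simps)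
          finally have "(1 - \<sigma>) * (\<tau> * (gm j i0 * norm (wt j i0 - w j))) < (1 - \<sigma>) * \<epsilon>"
            by (simp add: algebra_simps)
          hence lt: "\<tau> * (gm j i0 * norm (wt j i0 - w j)) < \<epsilon>" using sigma by simp
          have "gm j i0 < gg j" using ggeq ghp tau by simp
          hence mono: "norm (dd j) \<le> norm (wt j i0 - w j)" unfolding dd_def
            by (rule mono_step[OF Qh Qacc])
          have "gg j * norm (dd j) \<le> \<tau> * (gm j i0 * norm (wt j i0 - w j))"
            using mono ghp tau by (simp add: ggeq mult_left_mono)
          thus ?thesis using lt by simp
        qed
      qed
    qed
  qed
  show ?thesis unfolding LIMSEQ_iff
  proof (intro allI impI)
    fix r :: real assume r: "r > 0"
    obtain G where Gp: "G > 0" and G: "\<And>j. gg j * norm (dd j) \<le> \<tau> * G * norm (dd j) \<or> gg j * norm (dd j) \<le> r/2"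
      using key[of "r/2"] r by auto
    have "r / (2 * \<tau> * G) > 0" using r tau Gp by simp
    then obtain N where N: "\<And>n. n \<ge> N \<Longrightarrow> norm (norm (dd n) - 0) < r / (2*\<tau>*G)"
      using d_lim unfolding LIMSEQ_iff by blast
    show "\<exists>no. \<forall>n\<ge>no. norm (gg n * norm (dd n) - 0) < r"
    proof (intro exI allI impI)
      fix n assume "N \<le> n"
      hence "norm (dd n) < r / (2*\<tau>*G)" using N by simp
      hence "norm (dd n) * (\<tau> * G) < r/2" using tau Gp by (simp add: pos_less_divide_eq mult.commute mult.left_commute)
      hence "\<tau> * G * norm (dd n) < r/2" by (simp add: mult.commute)
      moreover have "gg n * norm (dd n) \<ge> 0" using gg_pos[of n] by simp
      ultimately show "norm (gg n * norm (dd n) - 0) < r" using G[of n] r by auto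
    qed
  qed
qed

lemma caseII_ex: "\<exists>K::nat\<Rightarrow>nat. strict_mono K \<and> convergent (w \<circ> K)"
proof -
  have "seq_compact SS" by (rule compact_imp_seq_compact[OF SS_compact])
  then obtain l r where "strict_mono (r::nat\<Rightarrow>nat)" "(w \<circ> r) \<longlonglongrightarrow> l"
    unfolding seq_compact_def using inS by blast
  thus ?thesis unfolding convergent_def by blast
qed

lemma caseII_lim:
  assumes sm: "strict_mono K" and wl: "(w \<circ> K) \<longlonglongrightarrow> wbar"
  shows "M_stationary grad D wbar \<and>
    (\<lambda>k. gm (K k) (ii (K k)) *\<^sub>R (w (Suc (K k)) - w (K k))) \<longlonglongrightarrow> 0"
proof -
  have gdv: "(\<lambda>j. gg j *\<^sub>R dd j) \<longlonglongrightarrow> 0"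
  proof -
    have e: "norm (gg j *\<^sub>R dd j) = gg j * norm (dd j)" for j using gg_pos[of j] by simp
    have "(\<lambda>j. norm (gg j *\<^sub>R dd j)) \<longlonglongrightarrow> 0" unfolding e by (rule gd_lim)
    thus ?thesis by (rule tendsto_norm_zero_cancel)
  qed
  have gdK: "(\<lambda>k. gg (K k) *\<^sub>R dd (K k)) \<longlonglongrightarrow> 0"
    using LIMSEQ_subseq_LIMSEQ[OF gdv sm] by (simp add: o_def)
  have ddv: "dd \<longlonglongrightarrow> 0" by (rule tendsto_norm_zero_cancel[OF d_lim])
  have ddK: "(\<lambda>k. dd (K k)) \<longlonglongrightarrow> 0" using LIMSEQ_subseq_LIMSEQ[OF ddv sm] by (simp add: o_def)
  have wK: "(\<lambda>k. w (K k)) \<longlonglongrightarrow> wbar" using wl by (simp add: o_def)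
  have wbD: "wbar \<in> D" by (rule closed_sequentially[OF D_closed wD' wK])
  have zK: "(\<lambda>k. w (Suc (K k))) \<longlonglongrightarrow> wbar"
  proof -
    have "(\<lambda>k. w (K k) + dd (K k)) \<longlonglongrightarrow> wbar + 0" by (intro tendsto_add wK ddK)
    thus ?thesis by (simp add: dd_def)
  qed
  have isc: "isCont grad x" for x using grad_cont by (simp add: continuous_on_eq_continuous_at)
  have gK: "(\<lambda>k. grad (w (K k))) \<longlonglongrightarrow> grad wbar" by (rule isCont_tendsto_compose[OF isc wK])
  have eq: "gg (K k) *\<^sub>R ((w (K k) - (1 / gg (K k)) *\<^sub>R grad (w (K k))) - w (Suc (K k)))
      = - (gg (K k) *\<^sub>R dd (K k)) - grad (w (K k))" for k
    using gg_pos[of "K k"] by (simp add: dd_def algebra_simps)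
  have vl: "(\<lambda>k. gg (K k) *\<^sub>R ((w (K k) - (1 / gg (K k)) *\<^sub>R grad (w (K k))) - w (Suc (K k))))
      \<longlonglongrightarrow> - grad wbar"
    unfolding eq using tendsto_diff[OF tendsto_minus[OF gdK] gK] by simp
  have sQ: "w (Suc (K k)) \<in> proj D (w (K k) - (1 / gg (K k)) *\<^sub>R grad (w (K k)))" for k
    by (rule solvesQ_proj[OF Qacc gg_pos])
  have "- grad wbar \<in> lim_normal D wbar"
    using lim_normal_seq[of "\<lambda>k. w (Suc (K k))" D "\<lambda>k. w (K k) - (1 / gg (K k)) *\<^sub>R grad (w (K k))"
        "\<lambda>k. gg (K k)" wbar "- grad wbar"] sQ gg_pos zK vl by blast
  moreover have "grad wbar + - grad wbar = 0" by simp
  ultimately have "M_stationary grad D wbar" unfolding M_stationary_def using wbD by blast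
  moreover have "(\<lambda>k. gm (K k) (ii (K k)) *\<^sub>R (w (Suc (K k)) - w (K k))) \<longlonglongrightarrow> 0"
    using gdK by (simp add: gg_def dd_def)
  ultimately show ?thesis by blast
qed

end


theorem mainTheorem6:
  fixes \<phi> :: "'a::euclidean_space \<Rightarrow> real" and grad :: "'a \<Rightarrow> 'a"
    and D :: "'a set" and \<tau> \<sigma> gmin gmax :: real and m :: nat
    and w :: "nat \<Rightarrow> 'a" and wt :: "nat \<Rightarrow> nat \<Rightarrow> 'a" and g0 :: "nat \<Rightarrow> real"
  assumes deriv: "\<And>x. (\<phi> has_derivative (\<lambda>h. grad x \<bullet> h)) (at x)"
    and grad_cont: "continuous_on UNIV grad"
    and D_closed: "closed D" and D_ne: "D \<noteq> {}"
    and tau: "\<tau> > 1" and sigma: "0 < \<sigma>" "\<sigma> < 1"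
    and gams: "0 < gmin" "gmin \<le> gmax"
    and run: "alg_run \<phi> grad D \<tau> \<sigma> gmin gmax m w wt g0"
    and sublevel: "bounded {v \<in> D. \<phi> v \<le> \<phi> (w 0)}"
  shows
   "((\<exists>j. reached \<phi> grad \<sigma> m w wt j \<and> \<not> inner_terminates \<phi> grad \<sigma> m w wt j)
       \<longleftrightarrow> \<not> (\<forall>j. inner_terminates \<phi> grad \<sigma> m w wt j))
    \<and>
    (\<forall>j. reached \<phi> grad \<sigma> m w wt j \<and> \<not> inner_terminates \<phi> grad \<sigma> m w wt j \<longrightarrow>
        (\<lambda>i. wt j i) \<longlonglongrightarrow> w j \<and>
        M_stationary grad D (w j) \<and>
        (\<lambda>i. norm (gam \<tau> g0 j i *\<^sub>R (w j - wt j i) + grad (wt j i) - grad (w j))) \<longlonglongrightarrow> 0)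
    \<and>
    ((\<forall>j. inner_terminates \<phi> grad \<sigma> m w wt j) \<longrightarrow>
        (\<exists>K::nat\<Rightarrow>nat. strict_mono K \<and> convergent (w \<circ> K)) \<and>
        (\<forall>K wbar. strict_mono K \<and> (w \<circ> K) \<longlonglongrightarrow> wbar \<longrightarrow>
            M_stationary grad D wbar \<and>
            (\<lambda>k. gam \<tau> g0 (K k) (inner_index \<phi> grad \<sigma> m w wt (K k))
                   *\<^sub>R (w (Suc (K k)) - w (K k))) \<longlonglongrightarrow> 0))"
proof -
  interpret A: alg \<phi> grad D \<tau> \<sigma> gmin gmax m w wt g0
    using assms by (simp add: alg_def)
  have P1: "(\<exists>j. reached \<phi> grad \<sigma> m w wt j \<and> \<not> inner_terminates \<phi> grad \<sigma> m w wt j)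
       \<longleftrightarrow> \<not> (\<forall>j. inner_terminates \<phi> grad \<sigma> m w wt j)" by (rule A.partA)
  have P2: "\<forall>j. reached \<phi> grad \<sigma> m w wt j \<and> \<not> inner_terminates \<phi> grad \<sigma> m w wt j \<longrightarrow>
        (\<lambda>i. wt j i) \<longlonglongrightarrow> w j \<and>
        M_stationary grad D (w j) \<and>
        (\<lambda>i. norm (gam \<tau> g0 j i *\<^sub>R (w j - wt j i) + grad (wt j i) - grad (w j))) \<longlonglongrightarrow> 0"
    using A.caseI by blast
  have P3: "(\<forall>j. inner_terminates \<phi> grad \<sigma> m w wt j) \<longrightarrow>
        (\<exists>K::nat\<Rightarrow>nat. strict_mono K \<and> convergent (w \<circ> K)) \<and>
        (\<forall>K wbar. strict_mono K \<and> (w \<circ> K) \<longlonglongrightarrow> wbar \<longrightarrow>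
            M_stationary grad D wbar \<and>
            (\<lambda>k. gam \<tau> g0 (K k) (inner_index \<phi> grad \<sigma> m w wt (K k))
                   *\<^sub>R (w (Suc (K k)) - w (K k))) \<longlonglongrightarrow> 0)"
  proof
    assume allt: "\<forall>j. inner_terminates \<phi> grad \<sigma> m w wt j"
    interpret B: alg2 \<phi> grad D \<tau> \<sigma> gmin gmax m w wt g0
      using assms allt by (simp add: alg2_def alg2_axioms_def alg_def)
    show "(\<exists>K::nat\<Rightarrow>nat. strict_mono K \<and> convergent (w \<circ> K)) \<and>
        (\<forall>K wbar. strict_mono K \<and> (w \<circ> K) \<longlonglongrightarrow> wbar \<longrightarrow>
            M_stationary grad D wbar \<and>
            (\<lambda>k. gam \<tau> g0 (K k) (inner_index \<phi> grad \<sigma> m w wt (K k))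
                   *\<^sub>R (w (Suc (K k)) - w (K k))) \<longlonglongrightarrow> 0)"
      using B.caseII_ex B.caseII_lim by blast
  qed
  show ?thesis using P1 P2 P3 by blast
qed

end
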